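(* Let $f:\mathbb{R}^n\to(-\infty,+\infty]$ be proper, lower semicontinuous and prox-bounded with threshold $\lambda_f>0$, let $0<\lambda<\lambda_f$ and let $x_0\in\operatorname{dom}\partial_p^\lambda f$. Define $\widehat f:\mathbb{R}^n\to(-\infty,+\infty]$ by $$\widehat f(x):=f(x_0)+\lambda^{-1}j(x_0)+\sup\Big\{\sum_{i=0}^{k-1}\langle x_i^*+\lambda^{-1}x_i,x_{i+1}-x_i\rangle+\langle x_k^*+\lambda^{-1}x_k,x-x_k\rangle\Big\}-\lambda^{-1}j(x),$$ where the supremum is over all $k\in\mathbb N$, all $x_1,\dots,x_k\in\operatorname{dom}\partial_p^\lambda f$ and all $x_i^*\in\partial_p^\lambda f(x_i)$, $i=0,\dots,k$. Then: (i) $\widehat f=h_\lambda f$ and $e_\lambda\widehat f=e_\lambda f$; (ii) if in addition $f+\lambda^{-1}j$ is convex, then $\widehat f=f$.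
   Context: $j:=\frac12\|\cdot\|^2$. $e_\lambda f(x):=\inf_y\{f(y)+\frac1{2\lambda}\|y-x\|^2\}$; prox-bounded with threshold $\lambda_f=\sup\{\lambda>0:e_\lambda f(x)>-\infty\text{ for some }x\}$. $v\in\partial_p^\lambda f(x)$ iff $x\in\operatorname{dom}f$ and $f(y)\ge f(x)+\langle v,y-x\rangle-\frac1{2\lambda}\|y-x\|^2$ for all $y$. $h_\lambda f:=-e_\lambda(-e_\lambda f)$ is the $\lambda$-proximal hull. *)

theory Defs
  imports "HOL-Analysis.Analysis"
begin

definition jq :: "'a::euclidean_space \<Rightarrow> real" where
  "jq x = (norm x)\<^sup>2 / 2"

definition proper_fun :: "('a::euclidean_space \<Rightarrow> ereal) \<Rightarrow> bool" where
  "proper_fun f \<longleftrightarrow> (\<forall>x. f x \<noteq> -\<infinity>) \<and> (\<exists>x. f x \<noteq> \<infinity>)"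

definition lsc_fun :: "('a::euclidean_space \<Rightarrow> ereal) \<Rightarrow> bool" where
  "lsc_fun f \<longleftrightarrow> (\<forall>x. f x \<le> Liminf (at x) f)"

definition moreau_env :: "real \<Rightarrow> ('a::euclidean_space \<Rightarrow> ereal) \<Rightarrow> 'a \<Rightarrow> ereal" where
  "moreau_env lam f x = (INF y. f y + ereal ((norm (y - x))\<^sup>2 / (2 * lam)))"

definition prox_bounded :: "('a::euclidean_space \<Rightarrow> ereal) \<Rightarrow> bool" where
  "prox_bounded f \<longleftrightarrow> (\<exists>lam>0. \<exists>x. moreau_env lam f x > -\<infinity>)"

definition prox_threshold :: "('a::euclidean_space \<Rightarrow> ereal) \<Rightarrow> ereal" where
  "prox_threshold f = (SUP lam \<in> {lam::real. lam > 0 \<and> (\<exists>x. moreau_env lam f x > -\<infinity>)}. ereal lam)"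

definition prox_subdiff :: "real \<Rightarrow> ('a::euclidean_space \<Rightarrow> ereal) \<Rightarrow> 'a \<Rightarrow> 'a set" where
  "prox_subdiff lam f x = {v. f x < \<infinity> \<and>
     (\<forall>y. f y \<ge> f x + ereal (inner v (y - x) - (norm (y - x))\<^sup>2 / (2 * lam)))}"

definition dom_prox_subdiff :: "real \<Rightarrow> ('a::euclidean_space \<Rightarrow> ereal) \<Rightarrow> 'a set" where
  "dom_prox_subdiff lam f = {x. prox_subdiff lam f x \<noteq> {}}"

definition prox_hull :: "real \<Rightarrow> ('a::euclidean_space \<Rightarrow> ereal) \<Rightarrow> 'a \<Rightarrow> ereal" where
  "prox_hull lam f = (\<lambda>x. - moreau_env lam (\<lambda>y. - moreau_env lam f y) x)"

definition ext_convex :: "('a::euclidean_space \<Rightarrow> ereal) \<Rightarrow> bool" where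
  "ext_convex g \<longleftrightarrow> convex {(x, t::real). g x \<le> ereal t}"

definition fhat :: "real \<Rightarrow> ('a::euclidean_space \<Rightarrow> ereal) \<Rightarrow> 'a \<Rightarrow> 'a \<Rightarrow> ereal" where
  "fhat lam f x0 x = f x0 + ereal (jq x0 / lam)
     + (SUP p \<in> {(k::nat, xs::nat \<Rightarrow> 'a, vs::nat \<Rightarrow> 'a).
                 xs 0 = x0 \<and> (\<forall>i\<in>{1..k}. xs i \<in> dom_prox_subdiff lam f) \<and>
                 (\<forall>i\<le>k. vs i \<in> prox_subdiff lam f (xs i))}.
          (case p of (k, xs, vs) \<Rightarrow>
             ereal ((\<Sum>i<k. inner (vs i + (1/lam) *\<^sub>R xs i) (xs (Suc i) - xs i))
                    + inner (vs k + (1/lam) *\<^sub>R xs k) (x - xs k))))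
     - ereal (jq x / lam)"

end

theory Submission
  imports Defs
 begin

lemma ereal_shift_le:
  fixes a b :: ereal
  assumes "a + ereal p \<le> b + ereal q" "p' = p + k" "q' = q + k"
  shows "a + ereal p' \<le> b + ereal q'"
  using assms by (cases a; cases b) auto

lemma ereal_shift_iff:
  fixes a b :: ereal
  assumes "p' = p + k" "q' = q + k"
  shows "a + ereal p' \<le> b + ereal q' \<longleftrightarrow> a + ereal p \<le> b + ereal q"
  using assms by (cases a; cases b) auto

lemma lsc_at:
  assumes "lsc_fun f" "c < f x"
  shows "eventually (\<lambda>y. c < f y) (nhds x)"
proof -
  have "eventually (\<lambda>y. c < f y) (at x)"
    using assms le_Liminf_iff unfolding lsc_fun_def by blast
  then show ?thesis using assms(2)
    by (simp add: eventually_at_filter) (elim eventually_mono, auto)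
qed

lemma quad_bound:
  fixes y y0 w :: "'a::euclidean_space"
  assumes l: "0<l" "l<L" and h: "m - (norm (y - y0))\<^sup>2/(2*L) + (norm y)\<^sup>2/(2*l) - inner w y \<le> B"
  shows "norm y \<le> max 1 ((norm y0 / L + norm w + (norm y0)\<^sup>2/(2*L) + \<bar>m - B\<bar>) / (1/(2*l) - 1/(2*L)))"
proof -
  define r where "r = norm y"
  define a where "a = norm y0"
  define \<alpha> where "\<alpha> = 1/(2*l) - 1/(2*L)"
  define \<beta> where "\<beta> = a / L + norm w"
  define \<gamma> where "\<gamma> = a\<^sup>2/(2*L) + \<bar>m - B\<bar>"
  have L: "0 < L" using l by simp
  have al: "0 < \<alpha>" using l unfolding \<alpha>_def by (simp add: field_simps)
  have r0: "0 \<le> r" "0 \<le> a" by (auto simp: r_def a_def)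
  have "norm (y - y0) \<le> r + a" unfolding r_def a_def by (rule norm_triangle_ineq4)
  then have n1: "(norm (y - y0))\<^sup>2 \<le> (r + a)\<^sup>2" by (intro power_mono) auto
  have n2: "inner w y \<le> norm w * r" unfolding r_def by (rule norm_cauchy_schwarz)
  have "(norm (y - y0))\<^sup>2/(2*L) \<le> (r + a)\<^sup>2/(2*L)" using n1 L by (intro divide_right_mono) auto
  with h n2 have "m - (r + a)\<^sup>2/(2*L) + r\<^sup>2/(2*l) - norm w * r \<le> B" unfolding r_def by linarith
  moreover have "m - (r + a)\<^sup>2/(2*L) + r\<^sup>2/(2*l) - norm w * r = \<alpha> * r\<^sup>2 - \<beta> * r - a\<^sup>2/(2*L) + m"
    unfolding \<alpha>_def \<beta>_def using L l by (simp add: field_simps power2_eq_square)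
  ultimately have main: "\<alpha> * r\<^sup>2 \<le> \<beta> * r + a\<^sup>2/(2*L) + (B - m)" by linarith
  show ?thesis
  proof (cases "r \<le> 1")
    case True then show ?thesis unfolding r_def by simp
  next
    case False
    have g0: "0 \<le> \<gamma>" unfolding \<gamma>_def using L by simp
    have "a\<^sup>2/(2*L) + (B - m) \<le> \<gamma>" unfolding \<gamma>_def by simp
    also have "\<dots> \<le> \<gamma> * r" using g0 False by (simp add: mult_le_cancel_left1)
    finally have "\<alpha> * r * r \<le> (\<beta> + \<gamma>) * r" using main by (simp add: power2_eq_square algebra_simps)
    then have "\<alpha> * r \<le> \<beta> + \<gamma>" using False by (simp add: mult_le_cancel_right)
    then have "r \<le> (\<beta> + \<gamma>) / \<alpha>" using al by (simp add: field_simps)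
    then show ?thesis unfolding r_def \<alpha>_def \<beta>_def \<gamma>_def a_def by (simp add: add.assoc)
  qed
qed

lemma min_exists:
  fixes f :: "'a::euclidean_space \<Rightarrow> ereal"
  assumes lsc: "lsc_fun f" and nm: "\<And>x. f x \<noteq> -\<infinity>" and fin: "f p \<noteq> \<infinity>"
    and lb: "\<And>z. ereal m \<le> f z + ereal ((norm (z - y0))\<^sup>2 / (2*L))"
    and l: "0 < l" "l < L"
  shows "\<exists>z. f z \<noteq> \<infinity> \<and> (\<forall>y. f z + ereal ((norm z)\<^sup>2/(2*l) - inner w z)
                                 \<le> f y + ereal ((norm y)\<^sup>2/(2*l) - inner w y))"
proof -
  define q where "q y = (norm y)\<^sup>2/(2*l) - inner w y" for y
  define h where "h y = f y + ereal (q y)" for y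
  define I where "I = (INF y. h y)"
  have hp: "h p < \<infinity>" using fin by (cases "f p") (auto simp: h_def)
  have "I \<le> h p" unfolding I_def by (rule INF_lower) simp
  with hp have Ip: "I < \<infinity>" by (meson order.strict_trans1)
  define t where "t n = (if I = -\<infinity> then ereal (- real n) else I + ereal (1 / real (Suc n)))" for n
  have It: "I < t n" for n
    using Ip by (cases I) (auto simp: t_def)
  have "\<forall>n. \<exists>y. h y < t n" using It unfolding I_def by (meson INF_less_iff)
  then obtain ys where ys: "\<And>n. h (ys n) < t n" by metis
  define B0 where "B0 = (if I = -\<infinity> then 0 else real_of_ereal I + 1)"
  have tB: "t n \<le> ereal B0" for n
    using Ip by (cases I) (auto simp: t_def B0_def)
  define R where "R = max 1 ((norm y0 / L + norm w + (norm y0)\<^sup>2/(2*L) + \<bar>m - B0\<bar>) / (1/(2*l) - 1/(2*L)))"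
  have nb: "norm (ys n) \<le> R" for n
  proof -
    have hb: "h (ys n) \<le> ereal B0" using ys[of n] tB[of n] by simp
    then obtain F where F: "f (ys n) = ereal F" using nm[of "ys n"] by (cases "f (ys n)") (auto simp: h_def)
    have "F + q (ys n) \<le> B0" using hb F by (simp add: h_def)
    moreover have "m \<le> F + (norm (ys n - y0))\<^sup>2 / (2*L)" using lb[of "ys n"] F by simp
    ultimately have "m - (norm (ys n - y0))\<^sup>2/(2*L) + (norm (ys n))\<^sup>2/(2*l) - inner w (ys n) \<le> B0"
      unfolding q_def by linarith
    then show ?thesis unfolding R_def by (rule quad_bound[OF l])
  qed
  then have "bounded (range ys)" unfolding bounded_iff by blast
  then obtain z r where r: "strict_mono r" and lim: "(ys \<circ> r) \<longlonglongrightarrow> z"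
    using bounded_imp_convergent_subsequence by blast
  have key: "h z \<le> I"
  proof (rule ccontr)
    assume "\<not> h z \<le> I" then have "I < h z" by simp
    then obtain c where c: "I < ereal c" "ereal c < h z" using ereal_dense2 by blast
    have "ereal (c - q z) < f z" using c(2) by (cases "f z") (auto simp: h_def)
    then obtain c' where c': "ereal (c - q z) < ereal c'" "ereal c' < f z" using ereal_dense2 by blast
    have ev1: "eventually (\<lambda>y. ereal c' < f y) (nhds z)" using lsc_at[OF lsc c'(2)] .
    have ev1': "eventually (\<lambda>n. ereal c' < f (ys (r n))) sequentially"
      using ev1 lim unfolding filterlim_iff by (auto simp: o_def)
    have "isCont q z" unfolding q_def using l by (intro continuous_intros) auto
    then have "((\<lambda>n. q (ys (r n))) \<longlonglongrightarrow> q z)" using lim isCont_tendsto_compose[of z q "ys \<circ> r"]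
      by (simp add: o_def)
    moreover have "c - c' < q z" using c'(1) by simp
    ultimately have ev2: "eventually (\<lambda>n. c - c' < q (ys (r n))) sequentially"
      using order_tendstoD(1) by blast
    have ev3: "eventually (\<lambda>n. t (r n) < ereal c) sequentially"
    proof (cases "I = -\<infinity>")
      case True
      obtain N :: nat where N: "- c < real N" using reals_Archimedean2 by blast
      show ?thesis unfolding eventually_sequentially
      proof (intro exI allI impI)
        fix n assume "N \<le> n"
        then have "real N \<le> real (r n)" using seq_suble[OF r, of n] by simp
        then show "t (r n) < ereal c" using N True by (simp add: t_def)
      qed
    next
      case False
      then obtain i where i: "I = ereal i" using Ip by (cases I) auto
      then have "0 < c - i" using c(1) by simp
      then obtain N where N: "inverse (real (Suc N)) < c - i" using reals_Archimedean by blast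
      show ?thesis unfolding eventually_sequentially
      proof (intro exI allI impI)
        fix n assume "N \<le> n"
        then have "real (Suc N) \<le> real (Suc (r n))" using seq_suble[OF r, of n] by simp
        then have "1 / real (Suc (r n)) \<le> inverse (real (Suc N))"
          by (simp add: divide_simps)
        then show "t (r n) < ereal c" using N i by (simp add: t_def)
      qed
    qed
    from eventually_conj[OF ev1' eventually_conj[OF ev2 ev3]] obtain n where
      n: "ereal c' < f (ys (r n))" "c - c' < q (ys (r n))" "t (r n) < ereal c"
      unfolding eventually_sequentially by blast
    have "ereal c < h (ys (r n))" using n(1,2) by (cases "f (ys (r n))") (auto simp: h_def)
    moreover have "h (ys (r n)) < ereal c" using ys[of "r n"] n(3) by simp
    ultimately show False by simp
  qed
  have all: "h z \<le> h y" for y using key unfolding I_def by (meson INF_lower UNIV_I order_trans)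
  have "f z \<noteq> \<infinity>" using key Ip by (auto simp: h_def)
  then show ?thesis using all unfolding h_def q_def by blast
qed

definition GG :: "real \<Rightarrow> ('a::euclidean_space \<Rightarrow> ereal) \<Rightarrow> 'a \<Rightarrow> ereal" where
  "GG lam f y = f y + ereal (jq y / lam)"

definition grph :: "real \<Rightarrow> ('a::euclidean_space \<Rightarrow> ereal) \<Rightarrow> ('a \<times> 'a) set" where
  "grph lam f = {(z,u). f z \<noteq> \<infinity> \<and> (\<forall>y. GG lam f z + ereal (inner u (y - z)) \<le> GG lam f y)}"

definition AA :: "real \<Rightarrow> ('a::euclidean_space \<Rightarrow> ereal) \<Rightarrow> 'a \<Rightarrow> ereal" where
  "AA lam f x = (SUP p\<in>grph lam f. GG lam f (fst p) + ereal (inner (snd p) (x - fst p)))"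

lemma ereal_shift_iff0:
  fixes a b :: ereal
  assumes "p' = p + k"
  shows "a + ereal p' \<le> b + ereal k \<longleftrightarrow> a + ereal p \<le> b"
  using assms by (cases a; cases b) auto

lemma norm_diff_sq: "(norm (y - z))\<^sup>2 = (norm y)\<^sup>2 - 2 * inner y z + (norm (z::'a::real_inner))\<^sup>2"
  by (simp add: power2_norm_eq_inner inner_diff_left inner_diff_right inner_commute)

lemma SD:
  fixes f :: "'a::euclidean_space \<Rightarrow> ereal"
  assumes lam: "0 < lam"
  shows "v \<in> prox_subdiff lam f z \<longleftrightarrow> (z, v + (1/lam) *\<^sub>R z) \<in> grph lam f"
proof -
  have "f z + ereal (inner v (y - z) - (norm (y - z))\<^sup>2 / (2 * lam)) \<le> f y \<longleftrightarrow>
        GG lam f z + ereal (inner (v + (1/lam) *\<^sub>R z) (y - z)) \<le> GG lam f y" for y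
  proof -
    have "GG lam f z + ereal (inner (v + (1/lam) *\<^sub>R z) (y - z)) = 
          f z + ereal (jq z / lam + inner (v + (1/lam) *\<^sub>R z) (y - z))"
      unfolding GG_def by (simp add: add.assoc)
    moreover have "jq z / lam + inner (v + (1/lam) *\<^sub>R z) (y - z) =
       (inner v (y - z) - (norm (y - z))\<^sup>2 / (2 * lam)) + jq y / lam"
      unfolding jq_def norm_diff_sq using lam
      by (simp add: inner_diff_left inner_diff_right inner_add_left inner_add_right inner_commute field_simps power2_norm_eq_inner)
    ultimately show ?thesis unfolding GG_def
      by (simp add: ereal_shift_iff0)
  qed
  then show ?thesis unfolding prox_subdiff_def grph_def by auto
qed

lemma grph_fin:
  assumes "(z,u) \<in> grph lam f" "\<And>x. f x \<noteq> -\<infinity>"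
  shows "GG lam f z = ereal (real_of_ereal (GG lam f z))"
  using assms by (cases "f z") (auto simp: grph_def GG_def)

lemma A_le_G: "AA lam f y \<le> GG lam f y"
  unfolding AA_def by (rule SUP_least) (auto simp: grph_def)

lemma chain_le:
  fixes f :: "'a::euclidean_space \<Rightarrow> ereal"
  assumes lam: "0<lam" and xs0: "xs 0 = x0" and vs: "\<forall>i\<le>k. vs i \<in> prox_subdiff lam f (xs i)"
  shows "GG lam f x0 + ereal (\<Sum>i<k. inner (vs i + (1/lam) *\<^sub>R xs i) (xs (Suc i) - xs i)) \<le> GG lam f (xs k)"
  using vs
proof (induction k)
  case 0 then show ?case using xs0 by simp
next
  case (Suc k)
  define t where "t = inner (vs k + (1/lam) *\<^sub>R xs k) (xs (Suc k) - xs k)"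
  have IH: "GG lam f x0 + ereal (\<Sum>i<k. inner (vs i + (1/lam) *\<^sub>R xs i) (xs (Suc i) - xs i)) \<le> GG lam f (xs k)"
    using Suc by simp
  have "(xs k, vs k + (1/lam) *\<^sub>R xs k) \<in> grph lam f" using Suc.prems by (auto simp: SD[OF lam])
  then have st: "GG lam f (xs k) + ereal t \<le> GG lam f (xs (Suc k))" unfolding grph_def t_def by auto
  have "GG lam f x0 + ereal (\<Sum>i<Suc k. inner (vs i + (1/lam) *\<^sub>R xs i) (xs (Suc i) - xs i)) =
        (GG lam f x0 + ereal (\<Sum>i<k. inner (vs i + (1/lam) *\<^sub>R xs i) (xs (Suc i) - xs i))) + ereal t"
    by (simp add: t_def add.assoc)
  also have "\<dots> \<le> GG lam f (xs k) + ereal t" using IH by (rule add_right_mono)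
  also have "\<dots> \<le> GG lam f (xs (Suc k))" by (rule st)
  finally show ?case .
qed

lemma chain_term_le_A:
  fixes f :: "'a::euclidean_space \<Rightarrow> ereal"
  assumes lam: "0<lam" and xs0: "xs 0 = x0" and vs: "\<forall>i\<le>k. vs i \<in> prox_subdiff lam f (xs i)"
  shows "GG lam f x0 + ereal ((\<Sum>i<k. inner (vs i + (1/lam) *\<^sub>R xs i) (xs (Suc i) - xs i))
                    + inner (vs k + (1/lam) *\<^sub>R xs k) (x - xs k)) \<le> AA lam f x"
proof -
  have g: "(xs k, vs k + (1/lam) *\<^sub>R xs k) \<in> grph lam f" using vs by (auto simp: SD[OF lam])
  have "GG lam f x0 + ereal ((\<Sum>i<k. inner (vs i + (1/lam) *\<^sub>R xs i) (xs (Suc i) - xs i))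
                    + inner (vs k + (1/lam) *\<^sub>R xs k) (x - xs k)) =
    (GG lam f x0 + ereal (\<Sum>i<k. inner (vs i + (1/lam) *\<^sub>R xs i) (xs (Suc i) - xs i)))
      + ereal (inner (vs k + (1/lam) *\<^sub>R xs k) (x - xs k))" by (simp add: add.assoc)
  also have "\<dots> \<le> GG lam f (xs k) + ereal (inner (vs k + (1/lam) *\<^sub>R xs k) (x - xs k))"
    by (rule add_right_mono[OF chain_le[OF lam xs0 vs]])
  also have "\<dots> \<le> AA lam f x" unfolding AA_def
    by (rule SUP_upper2[OF g]) simp
  finally show ?thesis .
qed

lemma chain_constr:
  fixes f :: "'a::euclidean_space \<Rightarrow> ereal"
  assumes surj: "\<And>u. \<exists>z. (z,u) \<in> grph lam f" and nm: "\<And>x. f x \<noteq> -\<infinity>"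
    and g0: "(x0,u0) \<in> grph lam f" and gy: "(y,u) \<in> grph lam f" and m: "1 \<le> m"
  shows "\<exists>zs us. zs 0 = x0 \<and> zs m = y \<and> us m = u \<and> (\<forall>i. (zs i, us i) \<in> grph lam f) \<and>
     real_of_ereal (GG lam f y) - real_of_ereal (GG lam f x0)
       \<le> (\<Sum>i<m. inner (us i) (zs (Suc i) - zs i)) + inner (u - u0) (y - x0) / real m"
proof -
  define us where "us i = u0 + (real i / real m) *\<^sub>R (u - u0)" for i
  obtain Z where Z: "\<And>v. (Z v, v) \<in> grph lam f" using surj by metis
  define zs where "zs i = (if i = 0 then x0 else if i = m then y else Z (us i))" for i
  have us0: "us 0 = u0" by (simp add: us_def)
  have usm: "us m = u" using m by (simp add: us_def)
  have gr: "(zs i, us i) \<in> grph lam f" for i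
    using g0 gy Z us0 usm by (simp add: zs_def)
  define gv where "gv i = real_of_ereal (GG lam f (zs i))" for i
  have gv: "GG lam f (zs i) = ereal (gv i)" for i
    unfolding gv_def using grph_fin[OF gr nm] .
  define a where "a = (1 / real m) *\<^sub>R (u - u0)"
  have usS: "us (Suc i) = us i + a" for i
  proof -
    have "real (Suc i) / real m = real i / real m + 1 / real m" by (simp add: add_divide_distrib)
    then show ?thesis unfolding us_def a_def by (simp only: scaleR_add_left add.assoc)
  qed
  have step: "gv (Suc i) - gv i \<le> inner (us i) (zs (Suc i) - zs i) + inner a (zs (Suc i) - zs i)" for i
  proof -
    have "GG lam f (zs (Suc i)) + ereal (inner (us (Suc i)) (zs i - zs (Suc i))) \<le> GG lam f (zs i)"
      using gr[of "Suc i"] unfolding grph_def by auto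
    then have "gv (Suc i) + inner (us (Suc i)) (zs i - zs (Suc i)) \<le> gv i" using gv by simp
    moreover have "inner (us (Suc i)) (zs i - zs (Suc i)) = - (inner (us i) (zs (Suc i) - zs i) + inner a (zs (Suc i) - zs i))"
      unfolding usS by (simp add: inner_add_left inner_diff_right algebra_simps)
    ultimately show ?thesis by linarith
  qed
  have "(\<Sum>i<m. gv (Suc i) - gv i) \<le> (\<Sum>i<m. inner (us i) (zs (Suc i) - zs i) + inner a (zs (Suc i) - zs i))"
    by (rule sum_mono) (rule step)
  also have "\<dots> = (\<Sum>i<m. inner (us i) (zs (Suc i) - zs i)) + inner a (\<Sum>i<m. zs (Suc i) - zs i)"
    by (simp add: sum.distrib inner_sum_right)
  also have "(\<Sum>i<m. zs (Suc i) - zs i) = zs m - zs 0" by (rule sum_lessThan_telescope)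
  finally have "gv m - gv 0 \<le> (\<Sum>i<m. inner (us i) (zs (Suc i) - zs i)) + inner a (zs m - zs 0)"
    by (simp add: sum_lessThan_telescope)
  moreover have z0: "zs 0 = x0" and zm: "zs m = y" using m by (auto simp: zs_def)
  moreover have "inner a (y - x0) = inner (u - u0) (y - x0) / real m" by (simp add: a_def)
  ultimately have "real_of_ereal (GG lam f y) - real_of_ereal (GG lam f x0)
       \<le> (\<Sum>i<m. inner (us i) (zs (Suc i) - zs i)) + inner (u - u0) (y - x0) / real m"
    unfolding gv_def by simp
  then show ?thesis using gr usm z0 zm by blast
qed


lemma ME:
  fixes f :: "'a::euclidean_space \<Rightarrow> ereal"
  assumes lam: "0<lam" and g: "(z, (1/lam) *\<^sub>R y) \<in> grph lam f"
  shows "moreau_env lam f y = GG lam f z + ereal (jq y / lam - inner ((1/lam) *\<^sub>R y) z)"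
proof -
  define u where "u = (1/lam) *\<^sub>R y"
  have eq: "f w + ereal ((norm (w - y))\<^sup>2/(2*lam)) = GG lam f w + ereal (jq y/lam - inner u w)" for w
  proof -
    have i: "inner u w = inner w y / lam" unfolding u_def by (simp add: inner_commute)
    have "(norm (w - y))\<^sup>2/(2*lam) = jq w / lam + (jq y/lam - inner u w)"
      unfolding jq_def norm_diff_sq i using lam by (simp add: field_simps)
    then show ?thesis unfolding GG_def by (simp add: add.assoc)
  qed
  have le: "GG lam f z + ereal (jq y/lam - inner u z) \<le> GG lam f w + ereal (jq y/lam - inner u w)" for w
  proof -
    have "GG lam f z + ereal (inner u (w - z)) \<le> GG lam f w" using g unfolding grph_def u_def by auto
    moreover have "jq y/lam - inner u z = inner u (w - z) + (jq y/lam - inner u w)"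
      by (simp add: inner_diff_right)
    ultimately show ?thesis using ereal_shift_iff0 by metis
  qed
  have "moreau_env lam f y = (INF w. GG lam f w + ereal (jq y/lam - inner u w))"
    unfolding moreau_env_def using eq by (simp add: norm_minus_commute)
  also have "\<dots> = GG lam f z + ereal (jq y/lam - inner u z)"
    by (rule antisym) (auto intro!: INF_lower2[of z] INF_greatest le)
  finally show ?thesis unfolding u_def .
qed

lemma PH:
  fixes f :: "'a::euclidean_space \<Rightarrow> ereal"
  assumes lam: "0<lam" and nm: "\<And>x. f x \<noteq> -\<infinity>" and g: "(z, (1/lam) *\<^sub>R y) \<in> grph lam f"
  shows "- (- moreau_env lam f y + ereal ((norm (y - x))\<^sup>2 / (2 * lam))) =
         (GG lam f z + ereal (inner ((1/lam) *\<^sub>R y) (x - z))) - ereal (jq x / lam)"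
proof -
  obtain gz where gz: "GG lam f z = ereal gz" using grph_fin[OF g nm] by blast
  have "jq y / lam - inner ((1/lam) *\<^sub>R y) z - (norm (y - x))\<^sup>2 / (2 * lam) =
        inner ((1/lam) *\<^sub>R y) (x - z) - jq x / lam"
    unfolding jq_def norm_diff_sq using lam by (simp add: field_simps inner_diff_right inner_commute)
  then show ?thesis unfolding ME[OF lam g] gz by simp
qed

lemma norm_add_sq: "(norm (a + b))\<^sup>2 = (norm a)\<^sup>2 + 2 * inner a b + (norm (b::'a::real_inner))\<^sup>2"
  by (simp add: power2_norm_eq_inner inner_add_left inner_add_right inner_commute)

lemma conv_sub:
  fixes G :: "'a::euclidean_space \<Rightarrow> ereal"
  assumes cvx: "convex {(x, t::real). G x \<le> ereal t}" and nm: "\<And>x. G x \<noteq> -\<infinity>" and Gz: "G z \<noteq> \<infinity>"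
   and t: "0 < t" and mn: "\<And>y. G z + ereal ((norm (z - x))\<^sup>2/(2*t)) \<le> G y + ereal ((norm (y - x))\<^sup>2/(2*t))"
  shows "G z + ereal (inner ((1/t) *\<^sub>R (x - z)) (y - z)) \<le> G y"
proof (cases "G y = \<infinity>")
  case True then show ?thesis by simp
next
  case False
  obtain gz where gz: "G z = ereal gz" using Gz nm[of z] by (cases "G z") auto
  obtain gy where gy: "G y = ereal gy" using False nm[of y] by (cases "G y") auto
  define u where "u = (1/t) *\<^sub>R (x - z)"
  define P where "P = inner (z - x) (y - z)"
  define N where "N = (norm (y - z))\<^sup>2"
  define Q where "Q = (norm (z - x))\<^sup>2"
  define D where "D = N / (2*t)"
  have uP: "inner u (y - z) = - P / t" unfolding u_def P_def
    by (simp add: inner_minus_left[symmetric] minus_diff_eq)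
  have D0: "0 \<le> D" unfolding D_def N_def using t by simp
  have key: "gz + inner u (y - z) \<le> gy + s * D" if s: "0 < s" "s \<le> 1" for s
  proof -
    define ys where "ys = (1 - s) *\<^sub>R z + s *\<^sub>R y"
    have zin: "(z, gz) \<in> {(x, t::real). G x \<le> ereal t}" using gz by simp
    have yin: "(y, gy) \<in> {(x, t::real). G x \<le> ereal t}" using gy by simp
    have "(1 - s) *\<^sub>R (z, gz) + s *\<^sub>R (y, gy) \<in> {(x, t::real). G x \<le> ereal t}"
      by (rule convexD[OF cvx zin yin]) (use s in auto)
    then have Gys: "G ys \<le> ereal ((1 - s) * gz + s * gy)" unfolding ys_def by (simp add: scaleR_prod_def)
    then obtain g' where g': "G ys = ereal g'" using nm[of ys] by (cases "G ys") auto
    have e: "ys - x = (z - x) + s *\<^sub>R (y - z)" unfolding ys_def by (simp add: algebra_simps)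
    have "(norm (ys - x))\<^sup>2 = (norm ((z - x) + s *\<^sub>R (y - z)))\<^sup>2" by (simp only: e)
    also have "\<dots> = Q + 2 * s * P + s\<^sup>2 * N"
      unfolding Q_def P_def N_def norm_add_sq by (simp add: power_mult_distrib)
    finally have nys: "(norm (ys - x))\<^sup>2 = Q + 2 * s * P + s\<^sup>2 * N" .
    have "gz + Q / (2*t) \<le> g' + (norm (ys - x))\<^sup>2/(2*t)" using mn[of ys] gz g' Q_def by simp
    then have "gz + Q / (2*t) \<le> (1 - s) * gz + s * gy + (Q + 2 * s * P + s\<^sup>2 * N)/(2*t)"
      using Gys g' nys by simp
    then have "gz + Q / (2*t) \<le> gz - s * gz + s * gy + Q/(2*t) + s * P / t + s * (s * D)"
      using t unfolding D_def by (simp add: add_divide_distrib power2_eq_square algebra_simps)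
    then have "s * (gz + inner u (y - z)) \<le> s * (gy + s * D)" unfolding uP
      by (simp add: algebra_simps)
    then show ?thesis using s by simp
  qed
  have "gz + inner u (y - z) \<le> gy" 
  proof (rule field_le_epsilon)
    fix e :: real assume e: "0 < e"
    define s where "s = min 1 (e / (D + 1))"
    have s0: "0 < s" "s \<le> 1" unfolding s_def using e D0 by auto
    have "s * D \<le> e / (D + 1) * D" unfolding s_def using D0 e by (intro mult_right_mono) auto
    also have "\<dots> \<le> e" using D0 e by (simp add: divide_simps)
    finally show "gz + inner u (y - z) \<le> gy + e" using key[OF s0] by linarith
  qed
  then show ?thesis using gz gy unfolding u_def by simp
qed

lemma conv_part:
  fixes f :: "'a::euclidean_space \<Rightarrow> ereal"
  assumes lam: "0 < lam" "lam < L" and lsc: "lsc_fun f" and nm: "\<And>x. f x \<noteq> -\<infinity>" and fin: "f p \<noteq> \<infinity>"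
    and lb: "\<And>z. ereal m \<le> f z + ereal ((norm (z - y0))\<^sup>2/(2*L))"
    and cvx: "ext_convex (\<lambda>x. f x + ereal (jq x / lam))"
  shows "GG lam f x \<le> AA lam f x"
proof (rule ccontr)
  assume "\<not> ?thesis" then have "AA lam f x < GG lam f x" by simp
  then obtain c where c: "AA lam f x < ereal c" "ereal c < GG lam f x" using ereal_dense2 by blast
  have L0: "0 < L" using lam by simp
  have "ereal (c - jq x/lam) < f x" using c(2) by (cases "f x") (auto simp: GG_def)
  then obtain c' where c': "ereal (c - jq x / lam) < ereal c'" "ereal c' < f x" using ereal_dense2 by blast
  have ev1: "eventually (\<lambda>y. ereal c' < f y) (at x)"
    using lsc c'(2) le_Liminf_iff unfolding lsc_fun_def by blast
  have "isCont (\<lambda>y. jq y / lam) x" unfolding jq_def using lam by (intro continuous_intros) auto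
  then have ev2: "eventually (\<lambda>y. c - c' < jq y / lam) (at x)"
    using c'(1) unfolding isCont_def by (intro order_tendstoD(1)) auto
  have "eventually (\<lambda>y. ereal c < GG lam f y) (at x)"
    using eventually_conj[OF ev1 ev2]
  proof (rule eventually_mono)
    fix y assume "ereal c' < f y \<and> c - c' < jq y / lam"
    then show "ereal c < GG lam f y" by (cases "f y") (auto simp: GG_def)
  qed
  then obtain \<delta> where \<delta>: "\<delta> > 0" "\<And>y. y \<noteq> x \<Longrightarrow> dist y x < \<delta> \<Longrightarrow> ereal c < GG lam f y"
    unfolding eventually_at by auto
  have near: "ereal c < GG lam f y" if "dist y x < \<delta>" for y
    using \<delta> that c(2) by (cases "y = x") auto
  define d where "d = norm (x - y0)"
  define K where "K = \<bar>c - m\<bar> + d\<^sup>2 / L + 1"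
  define t where "t = 1 / (2 * (1/L + K/\<delta>\<^sup>2))"
  have K0: "0 < K" unfolding K_def using L0 by (simp add: add_nonneg_pos)
  have "0 < K/\<delta>\<^sup>2" using K0 \<delta> by simp
  then have t0: "0 < t" unfolding t_def using L0 by (simp add: add_pos_pos)
  have it: "1 / (2*t) = 1/L + K/\<delta>\<^sup>2" unfolding t_def by simp
  have all: "ereal c < GG lam f y + ereal ((norm (y - x))\<^sup>2/(2*t))" for y
  proof (cases "dist y x < \<delta>")
    case True
    have "0 \<le> (norm (y - x))\<^sup>2/(2*t)" using t0 by simp
    then show ?thesis using near[OF True] by (cases "GG lam f y") auto
  next
    case False
    show ?thesis
    proof (cases "f y")
      case (real F)
      define r where "r = norm (y - x)"
      have r\<delta>: "\<delta> \<le> r" using False unfolding r_def by (simp add: dist_norm)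
      have mF: "m \<le> F + (norm (y - y0))\<^sup>2/(2*L)" using lb[of y] real by simp
      have "norm (y - y0) \<le> r + d" unfolding r_def d_def
        using norm_triangle_ineq[of "y - x" "x - y0"] by simp
      then have "(norm (y - y0))\<^sup>2 \<le> (r + d)\<^sup>2" by (intro power_mono) auto
      also have "\<dots> \<le> 2 * r\<^sup>2 + 2 * d\<^sup>2"
      proof -
        have "(r + d)\<^sup>2 + (r - d)\<^sup>2 = 2 * r\<^sup>2 + 2 * d\<^sup>2" by (simp add: power2_eq_square algebra_simps)
        moreover have "0 \<le> (r - d)\<^sup>2" by simp
        ultimately show ?thesis by linarith
      qed
      finally have "(norm (y - y0))\<^sup>2/(2*L) \<le> (2 * r\<^sup>2 + 2 * d\<^sup>2)/(2*L)" using L0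
        by (intro divide_right_mono) auto
      also have "\<dots> = r\<^sup>2/L + d\<^sup>2/L" using L0 by (simp add: field_simps)
      finally have F1: "m - r\<^sup>2/L - d\<^sup>2/L \<le> F" using mF by linarith
      have "\<delta>\<^sup>2 \<le> r\<^sup>2" using r\<delta> \<delta> by (intro power_mono) auto
      then have "K \<le> K * (r\<^sup>2 / \<delta>\<^sup>2)" using K0 \<delta> by (simp add: field_simps)
      moreover have "r\<^sup>2/(2*t) = r\<^sup>2 * (1/(2*t))" by simp
      moreover have "r\<^sup>2 * (1/(2*t)) = r\<^sup>2/L + K * (r\<^sup>2/\<delta>\<^sup>2)" unfolding it by (simp add: algebra_simps)
      ultimately have F2: "r\<^sup>2/L + K \<le> r\<^sup>2/(2*t)" by linarith
      have j0: "0 \<le> jq y / lam" unfolding jq_def using lam by simp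
      have "c < F + jq y / lam + r\<^sup>2/(2*t)" using F1 F2 j0 unfolding K_def by linarith
      then show ?thesis using real unfolding GG_def r_def by simp
    qed (use nm in \<open>auto simp: GG_def\<close>)
  qed
  define l where "l = 1 / (1/lam + 1/t)"
  have l0: "0 < l" "l < L"
  proof -
    show "0 < l" unfolding l_def using lam t0 by (simp add: add_pos_pos)
    have "l < lam" unfolding l_def using lam t0 by (simp add: field_simps)
    then show "l < L" using lam by simp
  qed
  obtain z where zf: "f z \<noteq> \<infinity>" and zmin: "\<And>y. f z + ereal ((norm z)\<^sup>2/(2*l) - inner ((1/t) *\<^sub>R x) z)
                                 \<le> f y + ereal ((norm y)\<^sup>2/(2*l) - inner ((1/t) *\<^sub>R x) y)"
    using min_exists[OF lsc nm fin lb l0, of "(1/t) *\<^sub>R x"] by blast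
  have idn: "jq y / lam + (norm (y - x))\<^sup>2/(2*t) = ((norm y)\<^sup>2/(2*l) - inner ((1/t) *\<^sub>R x) y) + (norm x)\<^sup>2/(2*t)" for y
  proof -
    have ic: "inner ((1/t) *\<^sub>R x) y = inner y x / t" by (simp add: inner_commute)
    show ?thesis unfolding jq_def l_def norm_diff_sq ic using lam t0 by (simp add: field_simps)
  qed
  have mn: "GG lam f z + ereal ((norm (z - x))\<^sup>2/(2*t)) \<le> GG lam f y + ereal ((norm (y - x))\<^sup>2/(2*t))" for y
  proof -
    have "f z + ereal (jq z / lam + (norm (z - x))\<^sup>2/(2*t)) \<le> f y + ereal (jq y / lam + (norm (y - x))\<^sup>2/(2*t))"
      by (rule ereal_shift_le[OF zmin idn idn])
    then show ?thesis unfolding GG_def by (simp add: add.assoc)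
  qed
  have cv: "convex {(x, t::real). GG lam f x \<le> ereal t}"
    using cvx unfolding ext_convex_def GG_def .
  have nmG: "GG lam f y \<noteq> -\<infinity>" for y using nm[of y] by (cases "f y") (auto simp: GG_def)
  have Gz: "GG lam f z \<noteq> \<infinity>" using zf nm[of z] by (cases "f z") (auto simp: GG_def)
  have "(z, (1/t) *\<^sub>R (x - z)) \<in> grph lam f"
    unfolding grph_def using zf conv_sub[OF cv nmG Gz t0 mn] by auto
  then have "GG lam f z + ereal (inner ((1/t) *\<^sub>R (x - z)) (x - z)) \<le> AA lam f x"
    unfolding AA_def by (intro SUP_upper2) auto
  moreover have "inner ((1/t) *\<^sub>R (x - z)) (x - z) = 2 * ((norm (z - x))\<^sup>2/(2*t))"
    using t0 by (simp add: power2_norm_eq_inner norm_minus_commute)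
  moreover have "ereal c < GG lam f z + ereal ((norm (z - x))\<^sup>2/(2*t))" by (rule all)
  moreover obtain gz where gz: "GG lam f z = ereal gz" using Gz nmG[of z] by (cases "GG lam f z") auto
  moreover have "(norm (z - x))\<^sup>2/(2*t) \<le> 2 * ((norm (z - x))\<^sup>2/(2*t))"
  proof -
    have "0 \<le> (norm (z - x))\<^sup>2/(2*t)" using t0 by simp
    then show ?thesis by linarith
  qed
  ultimately have "ereal c < AA lam f x"
    by (metis (no_types, opaque_lifting) add_left_mono ereal_less_eq(3) order.strict_trans2 plus_ereal.simps(1))
  then show False using c(1) by simp
qed

theorem mainTheorem12:
  fixes f :: "'a::euclidean_space \<Rightarrow> ereal" and lam :: real and x0 :: 'a
  assumes "proper_fun f" and "lsc_fun f" and "prox_bounded f"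
    and "prox_threshold f > 0"
    and "0 < lam" and "ereal lam < prox_threshold f"
    and "x0 \<in> dom_prox_subdiff lam f"
  shows "(fhat lam f x0 = prox_hull lam f \<and> moreau_env lam (fhat lam f x0) = moreau_env lam f)
         \<and> (ext_convex (\<lambda>x. f x + ereal (jq x / lam)) \<longrightarrow> fhat lam f x0 = f)"
proof -
  have lam: "0 < lam" by (rule assms(5))
  have lsc: "lsc_fun f" by (rule assms(2))
  have nm: "\<And>x. f x \<noteq> -\<infinity>" using assms(1) unfolding proper_fun_def by auto
  obtain p where fin: "f p \<noteq> \<infinity>" using assms(1) unfolding proper_fun_def by auto
  obtain L where L: "ereal lam < ereal L" "0 < L" and "\<exists>x. moreau_env L f x > -\<infinity>"
    using assms(6) unfolding prox_threshold_def less_SUP_iff by auto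
  then obtain y0 where "moreau_env L f y0 > -\<infinity>" by blast
  then obtain m where m: "ereal m < moreau_env L f y0" using ereal_dense2 by blast
  have lb: "\<And>z. ereal m \<le> f z + ereal ((norm (z - y0))\<^sup>2 / (2*L))"
  proof -
    fix z
    have "moreau_env L f y0 \<le> f z + ereal ((norm (z - y0))\<^sup>2 / (2*L))"
      unfolding moreau_env_def by (rule INF_lower) simp
    then show "ereal m \<le> f z + ereal ((norm (z - y0))\<^sup>2 / (2*L))" using m by simp
  qed
  have lamL: "lam < L" using L by simp
  have surj: "\<exists>z. (z,u) \<in> grph lam f" for u
  proof -
    obtain z where zf: "f z \<noteq> \<infinity>" and zmin: "\<And>y. f z + ereal ((norm z)\<^sup>2/(2*lam) - inner u z)
                                 \<le> f y + ereal ((norm y)\<^sup>2/(2*lam) - inner u y)"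
      using min_exists[OF lsc nm fin lb lam lamL, of u] by blast
    have "GG lam f z + ereal (inner u (y - z)) \<le> GG lam f y" for y
    proof -
      have "f z + ereal (jq z / lam + inner u (y - z)) \<le> f y + ereal (jq y / lam)"
      proof (rule ereal_shift_le[OF zmin[of y]])
        show "jq z / lam + inner u (y - z) = ((norm z)\<^sup>2/(2*lam) - inner u z) + inner u y"
          by (simp add: jq_def inner_diff_right)
        show "jq y / lam = ((norm y)\<^sup>2/(2*lam) - inner u y) + inner u y"
          by (simp add: jq_def)
      qed
      then show ?thesis unfolding GG_def by (simp add: add.assoc)
    qed
    then show ?thesis using zf unfolding grph_def by auto
  qed
  obtain v0 where "v0 \<in> prox_subdiff lam f x0" using assms(7) unfolding dom_prox_subdiff_def by auto
  then have g0: "(x0, v0 + (1/lam) *\<^sub>R x0) \<in> grph lam f" by (rule SD[OF lam, THEN iffD1])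
  define u0 where "u0 = v0 + (1/lam) *\<^sub>R x0"
  note g0 = g0[folded u0_def]
  obtain g0r where G0: "GG lam f x0 = ereal g0r" using grph_fin[OF g0 nm] by blast
  define Sset where "Sset = {(k::nat, xs::nat \<Rightarrow> 'a, vs::nat \<Rightarrow> 'a).
                 xs 0 = x0 \<and> (\<forall>i\<in>{1..k}. xs i \<in> dom_prox_subdiff lam f) \<and>
                 (\<forall>i\<le>k. vs i \<in> prox_subdiff lam f (xs i))}"
  define trm where "trm (x::'a) (p::nat \<times> (nat \<Rightarrow> 'a) \<times> (nat \<Rightarrow> 'a)) = (case p of (k, xs, vs) \<Rightarrow>
             ereal ((\<Sum>i<k. inner (vs i + (1/lam) *\<^sub>R xs i) (xs (Suc i) - xs i))
                    + inner (vs k + (1/lam) *\<^sub>R xs k) (x - xs k)))" for x p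
  have fh: "fhat lam f x0 x = AA lam f x - ereal (jq x / lam)" for x
  proof -
    define S where "S = (SUP p\<in>Sset. trm x p)"
    have fS: "fhat lam f x0 x = (GG lam f x0 + S) - ereal (jq x / lam)"
      unfolding fhat_def GG_def S_def Sset_def trm_def by simp
    have "GG lam f x0 + S = AA lam f x"
    proof (rule antisym)
      have "S \<le> AA lam f x - ereal g0r" unfolding S_def
      proof (rule SUP_least)
        fix p assume "p \<in> Sset"
        then obtain k xs vs where p: "p = (k, xs, vs)" "xs 0 = x0" "\<forall>i\<le>k. vs i \<in> prox_subdiff lam f (xs i)"
          unfolding Sset_def by auto
        have "ereal g0r + trm x p \<le> AA lam f x"
          using chain_term_le_A[OF lam p(2) p(3), of x] G0 p(1) unfolding trm_def by simp
        then show "trm x p \<le> AA lam f x - ereal g0r" by (simp add: ereal_le_minus add.commute)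
      qed
      then show "GG lam f x0 + S \<le> AA lam f x" unfolding G0 by (simp add: ereal_le_minus add.commute)
    next
      show "AA lam f x \<le> GG lam f x0 + S" unfolding AA_def
      proof (rule SUP_least)
        fix q assume q: "q \<in> grph lam f"
        obtain y u where yu: "q = (y, u)" by (cases q)
        have gy: "(y, u) \<in> grph lam f" using q yu by simp
        obtain gyr where Gy: "GG lam f y = ereal gyr" using grph_fin[OF gy nm] by blast
        define C where "C = inner (u - u0) (y - x0)"
        have "GG lam f y + ereal (inner u (x - y)) \<le> GG lam f x0 + S + ereal e" if e: "0 < e" for e
        proof -
          define mm where "mm = nat (ceiling (\<bar>C\<bar> / e)) + 1"
          have mm1: "1 \<le> mm" unfolding mm_def by simp
          have "\<bar>C\<bar> / e < real mm" unfolding mm_def by linarith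
          then have Cm: "C / real mm \<le> e" using e mm1
            by (simp add: divide_simps) (smt (verit, best) mult.commute)
          obtain zs us where zs: "zs 0 = x0" "zs mm = y" "us mm = u" "\<forall>i. (zs i, us i) \<in> grph lam f"
            and ineq: "real_of_ereal (GG lam f y) - real_of_ereal (GG lam f x0)
               \<le> (\<Sum>i<mm. inner (us i) (zs (Suc i) - zs i)) + inner (u - u0) (y - x0) / real mm"
            using chain_constr[OF surj nm g0 gy mm1] by blast
          define vs where "vs i = us i - (1/lam) *\<^sub>R zs i" for i
          have vsu: "vs i + (1/lam) *\<^sub>R zs i = us i" for i unfolding vs_def by simp
          have vsin: "vs i \<in> prox_subdiff lam f (zs i)" for i
          proof (rule SD[OF lam, THEN iffD2])
            show "(zs i, vs i + (1 / lam) *\<^sub>R zs i) \<in> grph lam f" using zs(4) vsu by simp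
          qed
          have mem: "(mm, zs, vs) \<in> Sset" unfolding Sset_def dom_prox_subdiff_def
            using zs(1) vsin by auto
          have tv: "trm x (mm, zs, vs) = ereal ((\<Sum>i<mm. inner (us i) (zs (Suc i) - zs i)) + inner u (x - y))"
            unfolding trm_def using vsu[of mm] zs(2,3) by (simp add: vsu)
          have "gyr + inner u (x - y) \<le> g0r + ((\<Sum>i<mm. inner (us i) (zs (Suc i) - zs i)) + inner u (x - y)) + e"
            using ineq Gy G0 Cm unfolding C_def by simp
          then have "GG lam f y + ereal (inner u (x - y)) \<le> GG lam f x0 + trm x (mm, zs, vs) + ereal e"
            using Gy G0 tv by simp
          also have "\<dots> \<le> GG lam f x0 + S + ereal e" unfolding S_def
            by (intro add_right_mono add_left_mono SUP_upper mem)
          finally show ?thesis .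
        qed
        then show "GG lam f (fst q) + ereal (inner (snd q) (x - fst q)) \<le> GG lam f x0 + S"
          using yu by (simp add: ereal_le_epsilon2)
      qed
    qed
    then show ?thesis using fS by simp
  qed
  have ph: "prox_hull lam f x = AA lam f x - ereal (jq x / lam)" for x
  proof -
    define T where "T y = - (- moreau_env lam f y + ereal ((norm (y - x))\<^sup>2 / (2 * lam)))" for y
    have "prox_hull lam f x = (SUP y. T y)"
      unfolding prox_hull_def moreau_env_def[of lam "\<lambda>y. - moreau_env lam f y"] T_def
      by (simp add: ereal_SUP_uminus_eq)
    also have "\<dots> = AA lam f x - ereal (jq x / lam)"
    proof (rule antisym)
      show "(SUP y. T y) \<le> AA lam f x - ereal (jq x / lam)"
      proof (rule SUP_least)
        fix y
        obtain z where z: "(z, (1/lam) *\<^sub>R y) \<in> grph lam f" using surj by blast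
        have "T y = (GG lam f z + ereal (inner ((1/lam) *\<^sub>R y) (x - z))) - ereal (jq x / lam)"
          unfolding T_def by (rule PH[OF lam nm z])
        also have "\<dots> \<le> AA lam f x - ereal (jq x / lam)"
          by (intro ereal_minus_mono order_refl) (unfold AA_def, rule SUP_upper2[OF z], simp)
        finally show "T y \<le> AA lam f x - ereal (jq x / lam)" .
      qed
    next
      have "AA lam f x \<le> (SUP y. T y) + ereal (jq x / lam)" unfolding AA_def
      proof (rule SUP_least)
        fix q assume q: "q \<in> grph lam f"
        obtain z u where zu: "q = (z, u)" by (cases q)
        have z: "(z, (1/lam) *\<^sub>R (lam *\<^sub>R u)) \<in> grph lam f" using q zu lam by simp
        have "T (lam *\<^sub>R u) = (GG lam f z + ereal (inner u (x - z))) - ereal (jq x / lam)"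
          unfolding T_def using PH[OF lam nm z] lam by simp
        then have "GG lam f z + ereal (inner u (x - z)) \<le> T (lam *\<^sub>R u) + ereal (jq x / lam)"
          by (cases "GG lam f z + ereal (inner u (x - z))") simp_all
        also have "\<dots> \<le> (SUP y. T y) + ereal (jq x / lam)" by (intro add_right_mono SUP_upper) simp
        finally show "GG lam f (fst q) + ereal (inner (snd q) (x - fst q)) \<le> (SUP y. T y) + ereal (jq x / lam)"
          using zu by simp
      qed
      then show "AA lam f x - ereal (jq x / lam) \<le> (SUP y. T y)" by (simp add: ereal_minus_le)
    qed
    finally show ?thesis .
  qed
  have P1: "fhat lam f x0 = prox_hull lam f" using fh ph by auto
  have P2: "moreau_env lam (fhat lam f x0) x = moreau_env lam f x" for x
  proof -
    define u where "u = (1/lam) *\<^sub>R x"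
    obtain z where z: "(z, u) \<in> grph lam f" using surj by blast
    obtain gz where gz: "GG lam f z = ereal gz" using grph_fin[OF z nm] by blast
    have me: "moreau_env lam f x = ereal (gz + (jq x / lam - inner u z))"
      using ME[OF lam z[unfolded u_def]] gz unfolding u_def by simp
    have "moreau_env lam (fhat lam f x0) x =
          (INF y. (AA lam f y - ereal (jq y / lam)) + ereal ((norm (y - x))\<^sup>2 / (2 * lam)))"
      unfolding moreau_env_def fh ..
    also have "\<dots> = ereal (gz + (jq x / lam - inner u z))"
    proof (rule antisym)
      have "(AA lam f z - ereal (jq z / lam)) + ereal ((norm (z - x))\<^sup>2 / (2 * lam))
            \<le> (GG lam f z - ereal (jq z / lam)) + ereal ((norm (z - x))\<^sup>2 / (2 * lam))"
        by (intro add_right_mono ereal_minus_mono A_le_G order_refl)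
      also have "\<dots> = ereal (gz + (jq x / lam - inner u z))"
      proof -
        have "gz - jq z / lam + (norm (z - x))\<^sup>2 / (2 * lam) = gz + (jq x / lam - inner u z)"
        proof -
          have ic: "inner u z = inner z x / lam" unfolding u_def by (simp add: inner_commute)
          show ?thesis unfolding jq_def norm_diff_sq ic using lam by (simp add: field_simps)
        qed
        then show ?thesis using gz by simp
      qed
      finally show "(INF y. (AA lam f y - ereal (jq y / lam)) + ereal ((norm (y - x))\<^sup>2 / (2 * lam)))
            \<le> ereal (gz + (jq x / lam - inner u z))" by (rule INF_lower2[OF UNIV_I])
    next
      show "ereal (gz + (jq x / lam - inner u z)) \<le>
        (INF y. (AA lam f y - ereal (jq y / lam)) + ereal ((norm (y - x))\<^sup>2 / (2 * lam)))"
      proof (rule INF_greatest)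
        fix y
        have iy: "gz + (jq x / lam - inner u z) = (gz + inner u (y - z)) - jq y / lam + (norm (y - x))\<^sup>2 / (2 * lam)"
        proof -
          have ic: "inner u y = inner y x / lam" "inner u z = inner z x / lam" unfolding u_def by (simp_all add: inner_commute)
          show ?thesis unfolding jq_def norm_diff_sq inner_diff_right ic using lam by (simp add: field_simps)
        qed
        have "GG lam f z + ereal (inner u (y - z)) \<le> AA lam f y"
          unfolding AA_def by (rule SUP_upper2[OF z]) simp
        then have "(ereal (gz + inner u (y - z)) - ereal (jq y / lam)) + ereal ((norm (y - x))\<^sup>2 / (2 * lam))
             \<le> (AA lam f y - ereal (jq y / lam)) + ereal ((norm (y - x))\<^sup>2 / (2 * lam))"
          using gz by (intro add_right_mono ereal_minus_mono order_refl) simp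
        then show "ereal (gz + (jq x / lam - inner u z)) \<le> (AA lam f y - ereal (jq y / lam)) + ereal ((norm (y - x))\<^sup>2 / (2 * lam))"
          unfolding iy by simp
      qed
    qed
    finally show ?thesis using me by simp
  qed
  have P3: "fhat lam f x0 = f" if cvx: "ext_convex (\<lambda>x. f x + ereal (jq x / lam))"
  proof
    fix x
    have "AA lam f x = GG lam f x"
      using conv_part[OF lam lamL lsc nm fin lb cvx] A_le_G by (metis antisym)
    then show "fhat lam f x0 x = f x" unfolding fh GG_def
      using nm[of x] by (cases "f x") auto
  qed
  show ?thesis using P1 P2 P3 by auto
qed

end
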